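(* Let $Q\subset\mathbb{R}^n$ be a cube and $f$ a locally integrable function that is not constant on $Q$. Then for every $\lambda>0$, \[ \left|\left\{x\in Q:\frac{M\big((f-f_Q)\mathbf 1_Q\big)(x)}{M^\sharp f(x)}>\lambda\right\}\right|\le Ce^{-c\lambda}|Q|, \] where $C,c>0$ are constants depending only on $n$.
   Context: $M$ is the Hardy–Littlewood maximal operator over cubes, $f_Q=\frac1{|Q|}\int_Qf$, and $M^\sharp f(x)=\sup_{R\ni x}\frac1{|R|}\int_R|f-f_R|$, the supremum over cubes $R$ containing $x$. *)

theory Defs
  imports "HOL-Analysis.Analysis"
begin

definition is_cube :: "'a::euclidean_space set \<Rightarrow> bool" where
  "is_cube Q \<longleftrightarrow> (\<exists>a h. h > 0 \<and> Q = cbox a (a + h *\<^sub>R One))"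

definition locally_integrable :: "('a::euclidean_space \<Rightarrow> real) \<Rightarrow> bool" where
  "locally_integrable f \<longleftrightarrow> (\<forall>K. compact K \<longrightarrow> set_integrable lebesgue K f)"

definition avg :: "('a::euclidean_space \<Rightarrow> real) \<Rightarrow> 'a set \<Rightarrow> real" where
  "avg f Q = (LINT y:Q|lebesgue. f y) / measure lebesgue Q"

definition maxop :: "('a::euclidean_space \<Rightarrow> real) \<Rightarrow> 'a \<Rightarrow> ennreal" where
  "maxop g x = (SUP R\<in>{R. is_cube R \<and> x \<in> R}.
      (set_nn_integral lebesgue R (\<lambda>y. ennreal \<bar>g y\<bar>)) / emeasure lebesgue R)"

definition sharp :: "('a::euclidean_space \<Rightarrow> real) \<Rightarrow> 'a \<Rightarrow> ennreal" where
  "sharp f x = (SUP R\<in>{R. is_cube R \<and> x \<in> R}.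
      (set_nn_integral lebesgue R (\<lambda>y. ennreal \<bar>f y - avg f R\<bar>)) / emeasure lebesgue R)"

text \<open>Lebesgue outer measure (so that no measurability issue can trivialize a bound).\<close>
definition outer_lmeasure :: "'a::euclidean_space set \<Rightarrow> ennreal" where
  "outer_lmeasure S = (INF T\<in>{T\<in>sets lebesgue. S \<subseteq> T}. emeasure lebesgue T)"

end

theory Submission
  imports Defs
begin


lemma cube_emeasure: "emeasure lebesgue (cbox (b::'a::euclidean_space) (b + s *\<^sub>R One)) = ennreal (s ^ DIM('a))" if "s \<ge> 0"
  using that by (simp add: emeasure_lborel_cbox_eq inner_add_left prod_constant)
lemma cube_measure: "measure lebesgue (cbox (b::'a::euclidean_space) (b + s *\<^sub>R One)) = s ^ DIM('a)" if "s \<ge> 0"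
  using cube_emeasure[of s b] that by (simp add: measure_def)
lemma box_emeasure: "emeasure lebesgue (box (b::'a::euclidean_space) (b + s *\<^sub>R One)) = ennreal (s ^ DIM('a))" if "s \<ge> 0"
  using that by (simp add: emeasure_lborel_box_eq inner_add_left prod_constant)

lemma fin_meas: "S \<in> sets lebesgue \<Longrightarrow> S \<subseteq> cbox u v \<Longrightarrow> emeasure lebesgue S < \<infinity>"
  using emeasure_mono[of S "cbox u v" lebesgue] lmeasurable_cbox[of u v]
  by (auto simp: fmeasurable_def intro: order_le_less_trans)

locale LI =
  fixes f :: "'a::euclidean_space \<Rightarrow> real"
  assumes li: "locally_integrable f"
begin

definition RI :: "'a set \<Rightarrow> real \<Rightarrow> real" where "RI S c = (LINT y:S|lebesgue. \<bar>f y - c\<bar>)"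

lemma si: "S \<in> sets lebesgue \<Longrightarrow> S \<subseteq> cbox u v \<Longrightarrow> set_integrable lebesgue S f"
proof -
  assume a: "S \<in> sets lebesgue" "S \<subseteq> cbox u v"
  have "set_integrable lebesgue (cbox u v) f"
    using li compact_cbox[of u v] unfolding locally_integrable_def by simp
  then show ?thesis by (rule set_integrable_subset[OF _ a])
qed

lemma si_const: "S \<in> sets lebesgue \<Longrightarrow> S \<subseteq> cbox u v \<Longrightarrow> set_integrable lebesgue S (\<lambda>_. c::real)"
  unfolding set_integrable_def using fin_meas[of S u v] by (intro integrable_indicator) auto

lemma si_c: "S \<in> sets lebesgue \<Longrightarrow> S \<subseteq> cbox u v \<Longrightarrow> set_integrable lebesgue S (\<lambda>y. f y - c)"
  by (rule set_integral_diff(1)[OF si si_const])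

lemma si_abs: "S \<in> sets lebesgue \<Longrightarrow> S \<subseteq> cbox u v \<Longrightarrow> set_integrable lebesgue S (\<lambda>y. \<bar>f y - c\<bar>)"
  by (rule set_integrable_abs[OF si_c])

lemma J_eq:
  assumes "S \<in> sets lebesgue" "S \<subseteq> cbox u v"
  shows "set_nn_integral lebesgue S (\<lambda>y. ennreal \<bar>f y - c\<bar>) = ennreal (RI S c)"
proof -
  have i: "integrable lebesgue (\<lambda>x. indicator S x *\<^sub>R \<bar>f x - c\<bar>)"
    using si_abs[OF assms] unfolding set_integrable_def .
  have "(\<integral>\<^sup>+x. ennreal (indicator S x *\<^sub>R \<bar>f x - c\<bar>) \<partial>lebesgue) = ennreal (integral\<^sup>L lebesgue (\<lambda>x. indicator S x *\<^sub>R \<bar>f x - c\<bar>))"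
    by (rule nn_integral_eq_integral[OF i]) (auto split: split_indicator)
  moreover have "(\<lambda>x. ennreal (indicator S x *\<^sub>R \<bar>f x - c\<bar>)) = (\<lambda>x. ennreal \<bar>f x - c\<bar> * indicator S x)"
    by (auto split: split_indicator)
  ultimately show ?thesis unfolding RI_def set_lebesgue_integral_def by simp
qed

lemma RI_nonneg: "RI S c \<ge> 0"
  unfolding RI_def set_lebesgue_integral_def by (rule integral_nonneg_AE) (auto split: split_indicator)

lemma RI_mono:
  assumes "S \<in> sets lebesgue" "T \<in> sets lebesgue" "S \<subseteq> T" "T \<subseteq> cbox u v"
  shows "RI S c \<le> RI T c"
proof -
  have "ennreal (RI S c) \<le> ennreal (RI T c)"
    using J_eq[OF assms(1) order_trans[OF assms(3,4)], of c] J_eq[OF assms(2,4), of c]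
      nn_set_integral_set_mono[OF assms(3), of lebesgue "\<lambda>y. ennreal \<bar>f y - c\<bar>"] by simp
  then show ?thesis using RI_nonneg by simp
qed

lemma int_const: "S \<in> sets lebesgue \<Longrightarrow> S \<subseteq> cbox u v \<Longrightarrow> (LINT y:S|lebesgue. c) = c * measure lebesgue S"
  using set_integral_const[of S lebesgue c] fin_meas[of S u v] by simp

lemma RI_tri:
  assumes "S \<in> sets lebesgue" "S \<subseteq> cbox u v"
  shows "RI S c \<le> RI S c' + \<bar>c - c'\<bar> * measure lebesgue S"
proof -
  have "RI S c \<le> (LINT y:S|lebesgue. \<bar>f y - c'\<bar> + \<bar>c - c'\<bar>)"
    unfolding RI_def
    by (rule set_integral_mono[OF si_abs[OF assms] set_integral_add(1)[OF si_abs[OF assms] si_const[OF assms]]]) arith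
  also have "\<dots> = RI S c' + \<bar>c - c'\<bar> * measure lebesgue S"
    unfolding RI_def
    by (subst set_integral_add(2)[OF si_abs[OF assms] si_const[OF assms]])
       (simp add: int_const[OF assms])
  finally show ?thesis .
qed

lemma jensen:
  assumes "S \<in> sets lebesgue" "S \<subseteq> cbox u v"
  shows "\<bar>(LINT y:S|lebesgue. f y) - c * measure lebesgue S\<bar> \<le> RI S c"
proof -
  have e: "(LINT y:S|lebesgue. f y) - c * measure lebesgue S = (LINT y:S|lebesgue. f y - c)"
    by (simp add: set_integral_diff(2)[OF si[OF assms] si_const[OF assms]] int_const[OF assms])
  have b: "\<bar>(LINT y:S|lebesgue. f y - c)\<bar> \<le> RI S c"
    unfolding RI_def set_lebesgue_integral_def
  proof -
    have "(\<lambda>x. norm (indicator S x *\<^sub>R (f x - c))) = (\<lambda>x. indicator S x *\<^sub>R \<bar>f x - c\<bar>)"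
      by (auto split: split_indicator)
    then show "\<bar>integral\<^sup>L lebesgue (\<lambda>x. indicator S x *\<^sub>R (f x - c))\<bar> \<le> integral\<^sup>L lebesgue (\<lambda>x. indicator S x *\<^sub>R \<bar>f x - c\<bar>)"
      using integral_norm_bound[of lebesgue "\<lambda>x. indicator S x *\<^sub>R (f x - c)"] by (simp only: real_norm_def)
  qed
  show ?thesis using b by (simp only: e)
qed
end


lemma floor_nest:
  fixes u s :: real and d :: nat
  assumes "0 \<le> u" "0 < s"
  shows "real_of_int \<lfloor>u/s\<rfloor> * s \<le> real_of_int \<lfloor>u/(s/2^d)\<rfloor> * (s/2^d)"
    and "(real_of_int \<lfloor>u/(s/2^d)\<rfloor> + 1) * (s/2^d) \<le> (real_of_int \<lfloor>u/s\<rfloor> + 1) * s"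
proof -
  define k where "k = \<lfloor>u/s\<rfloor>"
  define k' where "k' = \<lfloor>u/(s/2^d)\<rfloor>"
  have e: "u/(s/2^d) = (u/s) * 2^d" using assms by (simp add: field_simps)
  have "real_of_int k \<le> u/s" unfolding k_def by linarith
  then have "real_of_int k * 2^d \<le> u/s * 2^d" by (rule mult_right_mono) simp
  then have "real_of_int (k * 2^d) \<le> u/(s/2^d)" unfolding e by simp
  then have 1: "k * 2^d \<le> k'" unfolding k'_def by (simp add: le_floor_iff)
  have "u/s < real_of_int k + 1" unfolding k_def by linarith
  then have "u/s * 2^d < (real_of_int k + 1) * 2^d" by (rule mult_strict_right_mono) simp
  then have "u/(s/2^d) < real_of_int ((k+1) * 2^d)" unfolding e by simp
  then have "real_of_int k' < real_of_int ((k+1) * 2^d)" unfolding k'_def by linarith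
  then have 2: "k' + 1 \<le> (k+1) * 2^d" by linarith
  have s2: "s = 2^d * (s/2^d)" by simp
  have p: "0 < s/2^d" using assms by simp
  show "real_of_int k * s \<le> real_of_int k' * (s/2^d)"
  proof -
    have "real_of_int k * s = real_of_int (k * 2^d) * (s/2^d)" by (subst s2) (simp add: field_simps)
    also have "\<dots> \<le> real_of_int k' * (s/2^d)" using 1 p by (intro mult_right_mono) (simp_all only: of_int_le_iff less_imp_le)
    finally show ?thesis .
  qed
  show "(real_of_int k' + 1) * (s/2^d) \<le> (real_of_int k + 1) * s"
  proof -
    have "(real_of_int k' + 1) * (s/2^d) = real_of_int (k' + 1) * (s/2^d)" by simp
    also have "\<dots> \<le> real_of_int ((k+1) * 2^d) * (s/2^d)" using 2 p by (intro mult_right_mono) (simp_all only: of_int_le_iff less_imp_le)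
    also have "\<dots> = (real_of_int k + 1) * s" by (subst (2) s2) (simp add: field_simps)
    finally show ?thesis .
  qed
qed

locale Cells = LI f for f :: "'a::euclidean_space \<Rightarrow> real" +
  fixes a :: 'a and h :: real
  assumes hpos: "h > 0"
begin

definition sj :: "nat \<Rightarrow> real" where "sj j = h / 2^j"
definition idx :: "nat \<Rightarrow> 'a \<Rightarrow> 'a \<Rightarrow> nat" where
  "idx j y = (\<lambda>i\<in>Basis. nat \<lfloor>(y \<bullet> i - a \<bullet> i) / sj j\<rfloor>)"
definition Qho :: "'a set" where "Qho = {y. \<forall>i\<in>Basis. a \<bullet> i \<le> y \<bullet> i \<and> y \<bullet> i < a \<bullet> i + h}"
definition corner :: "nat \<times> ('a \<Rightarrow> nat) \<Rightarrow> 'a" where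
  "corner d = a + (\<Sum>i\<in>Basis. (real (snd d i) * sj (fst d)) *\<^sub>R i)"
definition Kc :: "nat \<times> ('a \<Rightarrow> nat) \<Rightarrow> 'a set" where
  "Kc d = cbox (corner d) (corner d + sj (fst d) *\<^sub>R One)"
definition Cc :: "nat \<times> ('a \<Rightarrow> nat) \<Rightarrow> 'a set" where
  "Cc d = {y \<in> Qho. idx (fst d) y = snd d}"

lemma sj_pos: "sj j > 0" unfolding sj_def using hpos by simp

lemma sj_shift: "j \<le> j' \<Longrightarrow> sj j' = sj j / 2^(j'-j)"
  unfolding sj_def by (simp add: power_diff)

lemma corner_inner: "i \<in> Basis \<Longrightarrow> corner (j,k) \<bullet> i = a \<bullet> i + real (k i) * sj j"
  unfolding corner_def by (simp add: inner_add_left inner_sum_left inner_Basis if_distrib cong: if_cong)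

lemma mem_Kc: "y \<in> Kc (j,k) \<longleftrightarrow> (\<forall>i\<in>Basis. a \<bullet> i + real (k i) * sj j \<le> y \<bullet> i \<and> y \<bullet> i \<le> a \<bullet> i + real (k i) * sj j + sj j)"
  unfolding Kc_def mem_box by (simp add: inner_add_left corner_inner)

lemma idx_props:
  assumes "y \<in> Qho" "i \<in> Basis"
  shows "a \<bullet> i + real (idx j y i) * sj j \<le> y \<bullet> i" "y \<bullet> i < a \<bullet> i + real (idx j y i) * sj j + sj j"
    "idx j y i < 2^j" "real (idx j y i) = real_of_int \<lfloor>(y \<bullet> i - a \<bullet> i) / sj j\<rfloor>"
proof -
  let ?u = "(y \<bullet> i - a \<bullet> i) / sj j"
  have u0: "0 \<le> ?u" using assms sj_pos[of j] unfolding Qho_def by (auto intro!: divide_nonneg_pos)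
  have "y \<bullet> i - a \<bullet> i < h" using assms unfolding Qho_def by auto
  then have "?u < h / sj j" by (rule divide_strict_right_mono) (rule sj_pos)
  then have ul: "?u < 2^j" unfolding sj_def using hpos by simp
  have e: "real (idx j y i) = real_of_int \<lfloor>?u\<rfloor>" unfolding idx_def using assms u0 by simp
  then show "real (idx j y i) = real_of_int \<lfloor>(y \<bullet> i - a \<bullet> i) / sj j\<rfloor>" .
  have sp: "sj j > 0" by (rule sj_pos)
  have "real_of_int \<lfloor>?u\<rfloor> \<le> ?u" by linarith
  then have "real_of_int \<lfloor>?u\<rfloor> * sj j \<le> ?u * sj j" using sp by (intro mult_right_mono) auto
  then have f1: "real (idx j y i) * sj j \<le> y \<bullet> i - a \<bullet> i" using sp unfolding e by simp
  have "?u < real_of_int \<lfloor>?u\<rfloor> + 1" by linarith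
  then have "?u * sj j < (real_of_int \<lfloor>?u\<rfloor> + 1) * sj j" using sp by (intro mult_strict_right_mono) auto
  then have f2: "y \<bullet> i - a \<bullet> i < (real (idx j y i) + 1) * sj j" using sp unfolding e by simp
  from f1 f2 show "a \<bullet> i + real (idx j y i) * sj j \<le> y \<bullet> i" "y \<bullet> i < a \<bullet> i + real (idx j y i) * sj j + sj j"
    by (auto simp: algebra_simps)
  have "real (idx j y i) < 2^j" using e ul by linarith
  then show "idx j y i < 2^j" by (metis of_nat_less_iff of_nat_numeral of_nat_power)
qed

lemma Cc_char:
  assumes "x \<in> Qho"
  shows "Cc (j, idx j x) = {y. \<forall>i::'a\<in>Basis. a \<bullet> i + real (idx j x i) * sj j \<le> y \<bullet> i \<and> y \<bullet> i < a \<bullet> i + real (idx j x i) * sj j + sj j}"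
proof safe
  fix y assume "y \<in> Cc (j, idx j x)"
  then have y: "y \<in> Qho" "idx j y = idx j x" unfolding Cc_def by auto
  fix i :: 'a assume i: "i \<in> Basis"
  show "a \<bullet> i + real (idx j x i) * sj j \<le> y \<bullet> i" "y \<bullet> i < a \<bullet> i + real (idx j x i) * sj j + sj j"
    using idx_props[OF y(1) i, of j] y(2) by auto
next
  fix y assume y: "\<forall>i\<in>Basis. a \<bullet> i + real (idx j x i) * sj j \<le> y \<bullet> i \<and> y \<bullet> i < a \<bullet> i + real (idx j x i) * sj j + sj j"
  have yQ: "y \<in> Qho" unfolding Qho_def
  proof safe
    fix i :: 'a assume i: "i \<in> Basis"
    have k: "idx j x i < 2^j" using idx_props[OF assms i] by simp
    then have "real (idx j x i) + 1 \<le> 2^j"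
      by (metis Suc_leI of_nat_Suc of_nat_le_iff of_nat_numeral of_nat_power add.commute)
    then have "(real (idx j x i) + 1) * sj j \<le> 2^j * sj j" using sj_pos[of j] by (intro mult_right_mono) auto
    also have "2^j * sj j = h" unfolding sj_def by simp
    finally have "(real (idx j x i) + 1) * sj j \<le> h" .
    then have "real (idx j x i) * sj j + sj j \<le> h" by (simp add: algebra_simps)
    moreover have "0 \<le> real (idx j x i) * sj j" using sj_pos[of j] by simp
    ultimately show "a \<bullet> i \<le> y \<bullet> i" "y \<bullet> i < a \<bullet> i + h" using y[rule_format, OF i] by linarith+
  qed
  have "idx j y = idx j x"
  proof
    fix i show "idx j y i = idx j x i"
    proof (cases "i \<in> Basis")
      case True
      have "\<lfloor>(y \<bullet> i - a \<bullet> i) / sj j\<rfloor> = int (idx j x i)"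
        unfolding floor_eq_iff using y True sj_pos[of j] by (auto simp: field_simps)
      then show ?thesis using idx_props(4)[OF yQ True, of j] by simp
    next
      case False then show ?thesis unfolding idx_def by simp
    qed
  qed
  then show "y \<in> Cc (j, idx j x)" using yQ unfolding Cc_def by simp
qed

lemma Cc_sub_Kc: "Cc d \<subseteq> Kc d"
proof
  fix y assume y: "y \<in> Cc d"
  obtain j k where d: "d = (j,k)" by (cases d)
  have yQ: "y \<in> Qho" and k: "k = idx j y" using y d unfolding Cc_def by auto
  have "y \<in> Cc (j, idx j y)" using y d k by simp
  then show "y \<in> Kc d" unfolding d k Cc_char[OF yQ] mem_Kc by auto
qed

lemma box_sub_Cc:
  assumes "x \<in> Qho" shows "box (corner (j, idx j x)) (corner (j, idx j x) + sj j *\<^sub>R One) \<subseteq> Cc (j, idx j x)"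
  unfolding Cc_char[OF assms] by (force simp: mem_box inner_add_left corner_inner)

end

context Cells begin

definition Nodes where "Nodes = {(j, idx j x) | j x. x \<in> Qho}"

lemma nest:
  assumes x: "x \<in> Qho" and jj: "j \<le> j'"
  shows "Cc (j', idx j' x) \<subseteq> Cc (j, idx j x)" "Kc (j', idx j' x) \<subseteq> Kc (j, idx j x)"
proof -
  define d where "d = j' - j"
  have s': "sj j' = sj j / 2^d" unfolding d_def by (rule sj_shift[OF jj])
  have co: "real (idx j x i) * sj j \<le> real (idx j' x i) * sj j'
         \<and> real (idx j' x i) * sj j' + sj j' \<le> real (idx j x i) * sj j + sj j" if i: "i \<in> Basis" for i
  proof -
    have u0: "0 \<le> x \<bullet> i - a \<bullet> i" using x i unfolding Qho_def by auto
    note fn = floor_nest[OF u0 sj_pos[of j], of d]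
    show ?thesis using fn unfolding idx_props(4)[OF x i, of j] idx_props(4)[OF x i, of j'] s'
      by (auto simp: algebra_simps)
  qed
  show "Cc (j', idx j' x) \<subseteq> Cc (j, idx j x)"
    unfolding Cc_char[OF x]
  proof safe
    fix y and i :: 'a assume y: "\<forall>i\<in>Basis. a \<bullet> i + real (idx j' x i) * sj j' \<le> y \<bullet> i \<and> y \<bullet> i < a \<bullet> i + real (idx j' x i) * sj j' + sj j'"
      and i: "i \<in> Basis"
    show "a \<bullet> i + real (idx j x i) * sj j \<le> y \<bullet> i" "y \<bullet> i < a \<bullet> i + real (idx j x i) * sj j + sj j"
      using y[rule_format, OF i] co[OF i] by linarith+
  qed
  show "Kc (j', idx j' x) \<subseteq> Kc (j, idx j x)"
  proof
    fix y assume "y \<in> Kc (j', idx j' x)"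
    then have y: "\<forall>i\<in>Basis. a \<bullet> i + real (idx j' x i) * sj j' \<le> y \<bullet> i \<and> y \<bullet> i \<le> a \<bullet> i + real (idx j' x i) * sj j' + sj j'"
      unfolding mem_Kc .
    show "y \<in> Kc (j, idx j x)" unfolding mem_Kc
    proof
      fix i :: 'a assume i: "i \<in> Basis"
      show "a \<bullet> i + real (idx j x i) * sj j \<le> y \<bullet> i \<and> y \<bullet> i \<le> a \<bullet> i + real (idx j x i) * sj j + sj j"
        using y[rule_format, OF i] co[OF i] by linarith
    qed
  qed
qed

lemma idx_cons:
  assumes "x \<in> Qho" "y \<in> Qho" "j \<le> j'" "idx j' y = idx j' x"
  shows "idx j y = idx j x"
proof -
  have "y \<in> Cc (j', idx j' x)" using assms unfolding Cc_def by simp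
  then have "y \<in> Cc (j, idx j x)" using nest[OF assms(1,3)] by blast
  then show ?thesis unfolding Cc_def by simp
qed

lemma halfopen_borel: "{y::'a. \<forall>i\<in>Basis. l i \<le> y \<bullet> i \<and> y \<bullet> i < u i} \<in> sets borel"
proof -
  have "{y::'a. \<forall>i\<in>Basis. l i \<le> y \<bullet> i \<and> y \<bullet> i < u i} = (\<Inter>i\<in>Basis. {y. l i \<le> y \<bullet> i} \<inter> {y. y \<bullet> i < u i})"
    by auto
  also have "\<dots> \<in> sets borel"
    by (intro sets.finite_INT finite_Basis sets.Int borel_closed borel_open closed_halfspace_component_ge open_halfspace_component_lt) auto
  finally show ?thesis .
qed

lemma Cc_sets: "Cc d \<in> sets lebesgue"
proof (cases "Cc d = {}")
  case True then show ?thesis by simp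
next
  case False
  then obtain y where y: "y \<in> Cc d" by blast
  obtain j k where d: "d = (j,k)" by (cases d)
  have yQ: "y \<in> Qho" and k: "k = idx j y" using y d unfolding Cc_def by auto
  show ?thesis unfolding d k Cc_char[OF yQ]
    by (rule sets_completionI_sets) (simp add: halfopen_borel)
qed

lemma Kc_sets: "Kc d \<in> sets lebesgue"
  unfolding Kc_def by simp

lemma Kc_meas: "emeasure lebesgue (Kc d) = ennreal (sj (fst d) ^ DIM('a))" "measure lebesgue (Kc d) = sj (fst d) ^ DIM('a)"
  unfolding Kc_def using cube_emeasure[of "sj (fst d)" "corner d"] cube_measure[of "sj (fst d)" "corner d"] sj_pos
  by (auto simp: less_imp_le)

lemma Kc_minus_Cc_null:
  assumes x: "x \<in> Qho"
  shows "AE y in lebesgue. (y \<in> Kc (j, idx j x) \<longleftrightarrow> y \<in> Cc (j, idx j x))"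
proof -
  let ?c = "corner (j, idx j x)" and ?s = "sj j"
  let ?N = "cbox ?c (?c + ?s *\<^sub>R One) - box ?c (?c + ?s *\<^sub>R One)"
  have bs: "box ?c (?c + ?s *\<^sub>R One) \<subseteq> cbox ?c (?c + ?s *\<^sub>R One)" by (rule box_subset_cbox)
  have "emeasure lebesgue ?N = emeasure lebesgue (cbox ?c (?c + ?s *\<^sub>R One)) - emeasure lebesgue (box ?c (?c + ?s *\<^sub>R One))"
    by (rule emeasure_Diff) (use bs fin_meas[of "box ?c (?c + ?s *\<^sub>R One)" ?c "?c + ?s *\<^sub>R One"] in auto)
  also have "\<dots> = 0" using cube_emeasure[of ?s ?c] box_emeasure[of ?s ?c] sj_pos[of j] by simp
  finally have N: "?N \<in> null_sets lebesgue" by (auto simp: null_sets_def)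
  show ?thesis
    by (rule AE_I'[OF N]) (use box_sub_Cc[OF x, of j] Cc_sub_Kc[of "(j, idx j x)"] in \<open>auto simp: Kc_def\<close>)
qed

lemma Cc_meas:
  assumes x: "x \<in> Qho"
  shows "emeasure lebesgue (Cc (j, idx j x)) = ennreal (sj j ^ DIM('a))" "measure lebesgue (Cc (j, idx j x)) = sj j ^ DIM('a)"
proof -
  have "emeasure lebesgue (box (corner (j, idx j x)) (corner (j, idx j x) + sj j *\<^sub>R One)) \<le> emeasure lebesgue (Cc (j, idx j x))"
    by (rule emeasure_mono[OF box_sub_Cc[OF x] Cc_sets])
  moreover have "emeasure lebesgue (Cc (j, idx j x)) \<le> emeasure lebesgue (Kc (j, idx j x))"
    by (rule emeasure_mono[OF Cc_sub_Kc Kc_sets])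
  ultimately show e: "emeasure lebesgue (Cc (j, idx j x)) = ennreal (sj j ^ DIM('a))"
    using box_emeasure[of "sj j" "corner (j, idx j x)"] sj_pos[of j] Kc_meas(1)[of "(j, idx j x)"]
    by (auto intro: antisym)
  then show "measure lebesgue (Cc (j, idx j x)) = sj j ^ DIM('a)"
    using sj_pos[of j] by (simp add: measure_def)
qed

lemma J_CK:
  assumes x: "x \<in> Qho"
  shows "set_nn_integral lebesgue (Cc (j, idx j x)) g = set_nn_integral lebesgue (Kc (j, idx j x)) g"
  by (rule nn_integral_cong_AE) (use Kc_minus_Cc_null[OF x, of j] in \<open>auto split: split_indicator\<close>)

lemma RI_CK:
  assumes x: "x \<in> Qho"
  shows "RI (Cc (j, idx j x)) c = RI (Kc (j, idx j x)) c"
proof -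
  let ?K = "cbox (corner (j, idx j x)) (corner (j, idx j x) + sj j *\<^sub>R One)"
  have K: "Kc (j, idx j x) = ?K" unfolding Kc_def by simp
  have s1: "Cc (j, idx j x) \<subseteq> ?K" using Cc_sub_Kc[of "(j, idx j x)"] K by simp
  have "ennreal (RI (Cc (j, idx j x)) c) = ennreal (RI (Kc (j, idx j x)) c)"
    using J_eq[OF Cc_sets s1, of c] J_eq[OF _ subset_refl, of "corner (j, idx j x)" "corner (j, idx j x) + sj j *\<^sub>R One" c]
      J_CK[OF x, where j=j and g="\<lambda>y. ennreal \<bar>f y - c\<bar>"] K by simp
  then show ?thesis using RI_nonneg by simp
qed

lemma Kc_cube: "is_cube (Kc d)"
  unfolding is_cube_def Kc_def using sj_pos by blast

lemma idx0: "y \<in> Qho \<Longrightarrow> idx 0 y = (\<lambda>i\<in>Basis. 0)"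
  using idx_props(3)[of y _ 0] by (auto simp: idx_def)

lemma root:
  assumes x: "x \<in> Qho"
  shows "Kc (0, idx 0 x) = cbox a (a + h *\<^sub>R One)" "Cc (0, idx 0 x) = Qho"
proof -
  have "corner (0, idx 0 x) = a" unfolding corner_def idx0[OF x] by simp
  then show "Kc (0, idx 0 x) = cbox a (a + h *\<^sub>R One)" unfolding Kc_def sj_def by simp
  show "Cc (0, idx 0 x) = Qho" unfolding Cc_def using idx0 x by auto
qed

lemma Kc_sub_Q: "x \<in> Qho \<Longrightarrow> Kc (j, idx j x) \<subseteq> cbox a (a + h *\<^sub>R One)"
  using nest(2)[of x 0 j] root[of x] by simp

lemma Q_minus_Qho_null: "cbox a (a + h *\<^sub>R One) - Qho \<in> null_sets lebesgue"
proof -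
  let ?N = "cbox a (a + h *\<^sub>R One) - box a (a + h *\<^sub>R One)"
  have bs: "box a (a + h *\<^sub>R One) \<subseteq> cbox a (a + h *\<^sub>R One)" by (rule box_subset_cbox)
  have "emeasure lebesgue ?N = emeasure lebesgue (cbox a (a + h *\<^sub>R One)) - emeasure lebesgue (box a (a + h *\<^sub>R One))"
    by (rule emeasure_Diff) (use bs fin_meas[of "box a (a + h *\<^sub>R One)" a "a + h *\<^sub>R One"] in auto)
  also have "\<dots> = 0" using cube_emeasure[of h a] box_emeasure[of h a] hpos by simp
  finally have N: "?N \<in> null_sets lebesgue" by (auto simp: null_sets_def)
  have "box a (a + h *\<^sub>R One) \<subseteq> Qho"
  proof
    fix y assume "y \<in> box a (a + h *\<^sub>R One)"
    then have "\<forall>i\<in>Basis. a \<bullet> i < y \<bullet> i \<and> y \<bullet> i < a \<bullet> i + h" by (simp add: mem_box inner_add_left)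
    then show "y \<in> Qho" unfolding Qho_def using less_imp_le by blast
  qed
  then have "cbox a (a + h *\<^sub>R One) - Qho \<subseteq> ?N" by blast
  moreover have "cbox a (a + h *\<^sub>R One) - Qho \<in> sets lebesgue"
    using root(2)[of a] Cc_sets[of "(0, idx 0 a)"] by (auto simp: Qho_def intro!: sets.Diff)
  ultimately show ?thesis using N null_sets_subset by blast
qed

lemma sharp_osc:
  assumes s: "s > 0" and x: "x \<in> cbox b (b + s *\<^sub>R One)"
  shows "ennreal (RI (cbox b (b + s *\<^sub>R One)) (avg f (cbox b (b + s *\<^sub>R One))) / s ^ DIM('a)) \<le> sharp f x"
proof -
  let ?T = "cbox b (b + s *\<^sub>R One)"
  have c: "?T \<in> {R. is_cube R \<and> x \<in> R}" using s x unfolding is_cube_def by blast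
  have "set_nn_integral lebesgue ?T (\<lambda>y. ennreal \<bar>f y - avg f ?T\<bar>) / emeasure lebesgue ?T
      = ennreal (RI ?T (avg f ?T) / s ^ DIM('a))"
    using J_eq[OF _ subset_refl, of b "b + s *\<^sub>R One" "avg f ?T"] cube_emeasure[of s b] s RI_nonneg
    by (simp add: divide_ennreal)
  moreover have "set_nn_integral lebesgue ?T (\<lambda>y. ennreal \<bar>f y - avg f ?T\<bar>) / emeasure lebesgue ?T \<le> sharp f x"
    unfolding sharp_def by (rule SUP_upper[OF c])
  ultimately show ?thesis by simp
qed

definition mu :: "nat \<times> ('a \<Rightarrow> nat) \<Rightarrow> real" where "mu d = avg f (Kc d)"
definition osc :: "nat \<times> ('a \<Rightarrow> nat) \<Rightarrow> real" where "osc d = RI (Kc d) (mu d) / measure lebesgue (Kc d)"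

lemma osc_sharp: "y \<in> Kc d \<Longrightarrow> ennreal (osc d) \<le> sharp f y"
  using sharp_osc[of "sj (fst d)" y "corner d"] sj_pos unfolding osc_def mu_def Kc_meas(2)
  by (simp add: Kc_def)

lemma osc_nonneg: "osc d \<ge> 0"
  unfolding osc_def using RI_nonneg Kc_meas(2) sj_pos by (simp add: divide_nonneg_pos)

lemma RI_osc: "RI (Kc d) (mu d) = osc d * measure lebesgue (Kc d)"
  unfolding osc_def using Kc_meas(2)[of d] sj_pos[of "fst d"] by simp

lemma jensen_K: "\<bar>mu d - c\<bar> * measure lebesgue (Kc d) \<le> RI (Kc d) c"
proof -
  have m: "measure lebesgue (Kc d) > 0" using Kc_meas(2)[of d] sj_pos[of "fst d"] by simp
  have "\<bar>mu d - c\<bar> * measure lebesgue (Kc d) = \<bar>(LINT y:Kc d|lebesgue. f y) - c * measure lebesgue (Kc d)\<bar>"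
  proof -
    let ?A = "LINT y:Kc d|lebesgue. f y" and ?m = "measure lebesgue (Kc d)"
    have "(?A / ?m - c) * ?m = ?A - c * ?m" using m by (simp add: field_simps)
    then have "\<bar>?A / ?m - c\<bar> * ?m = \<bar>?A - c * ?m\<bar>" using m by (metis abs_mult abs_of_pos)
    then show ?thesis unfolding mu_def avg_def by simp
  qed
  also have "\<dots> \<le> RI (Kc d) c"
    using jensen[of "Kc d" "corner d" "corner d + sj (fst d) *\<^sub>R One" c] Kc_sets by (simp add: Kc_def)
  finally show ?thesis .
qed

end


primrec treeT :: "('i \<Rightarrow> 'b set) \<Rightarrow> ('i \<Rightarrow> 'i set) \<Rightarrow> nat \<Rightarrow> 'i \<Rightarrow> 'b set" where
  "treeT C St 0 n = C n"
| "treeT C St (Suc m) n = \<Union>((treeT C St m) ` St n)"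

lemma treeT_props:
  fixes M :: "'b measure" and C :: "'i \<Rightarrow> 'b set" and St :: "'i \<Rightarrow> 'i set"
  assumes meas: "\<And>n. C n \<in> sets M" and cnt: "\<And>n. countable (St n)"
    and sub: "\<And>n d. d \<in> St n \<Longrightarrow> C d \<subseteq> C n"
    and disj: "\<And>n. disjoint_family_on C (St n)"
    and half: "\<And>n. 2 * emeasure M (\<Union>(C ` St n)) \<le> emeasure M (C n)"
  shows "treeT C St m n \<in> sets M \<and> treeT C St m n \<subseteq> C n \<and> 2^m * emeasure M (treeT C St m n) \<le> emeasure M (C n)"
proof (induction m arbitrary: n)
  case 0
  then show ?case using meas by simp
next
  case (Suc m)
  let ?T = "treeT C St m"
  have m1: "?T d \<in> sets M" for d using Suc by blast
  have s1: "?T d \<subseteq> C d" for d using Suc by blast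
  have e1: "2^m * emeasure M (?T d) \<le> emeasure M (C d)" for d using Suc by blast
  have dT: "disjoint_family_on ?T (St n)"
    using disj[of n] s1 unfolding disjoint_family_on_def by blast
  have U: "emeasure M (\<Union>(?T ` St n)) = (\<integral>\<^sup>+d. emeasure M (?T d) \<partial>count_space (St n))"
    by (rule emeasure_UN_countable[OF m1 cnt dT])
  have UC: "emeasure M (\<Union>(C ` St n)) = (\<integral>\<^sup>+d. emeasure M (C d) \<partial>count_space (St n))"
    by (rule emeasure_UN_countable[OF meas cnt disj])
  have "2^Suc m * emeasure M (\<Union>(?T ` St n)) = 2 * (\<integral>\<^sup>+d. 2^m * emeasure M (?T d) \<partial>count_space (St n))"
    unfolding U by (simp add: nn_integral_cmult mult.assoc)
  also have "\<dots> \<le> 2 * (\<integral>\<^sup>+d. emeasure M (C d) \<partial>count_space (St n))"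
    by (intro mult_left_mono nn_integral_mono e1) auto
  also have "\<dots> \<le> emeasure M (C n)" using half[of n] UC by simp
  finally have "2^Suc m * emeasure M (treeT C St (Suc m) n) \<le> emeasure M (C n)" by simp
  moreover have "treeT C St (Suc m) n \<in> sets M"
    using m1 cnt[of n] by (auto intro!: sets.countable_UN')
  moreover have "treeT C St (Suc m) n \<subseteq> C n" using s1 sub by fastforce
  ultimately show ?case by blast
qed

context Cells begin

definition P :: "nat \<times> ('a \<Rightarrow> nat) \<Rightarrow> nat \<times> ('a \<Rightarrow> nat) \<Rightarrow> bool" where
  "P n d \<longleftrightarrow> RI (Kc d) (mu n) > 2 * osc n * measure lebesgue (Kc d)"
definition sig :: "nat \<times> ('a \<Rightarrow> nat) \<Rightarrow> 'a \<Rightarrow> nat" where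
  "sig n y = (LEAST j. fst n \<le> j \<and> P n (j, idx j y))"
definition St :: "nat \<times> ('a \<Rightarrow> nat) \<Rightarrow> (nat \<times> ('a \<Rightarrow> nat)) set" where
  "St n = {(sig n y, idx (sig n y) y) | y. y \<in> Cc n \<and> (\<exists>j \<ge> fst n. P n (j, idx j y))}"

lemma sig_props:
  assumes "\<exists>j \<ge> fst n. P n (j, idx j y)"
  shows "fst n \<le> sig n y" "P n (sig n y, idx (sig n y) y)" "\<And>j. fst n \<le> j \<Longrightarrow> j < sig n y \<Longrightarrow> \<not> P n (j, idx j y)"
    "\<And>j. fst n \<le> j \<Longrightarrow> P n (j, idx j y) \<Longrightarrow> sig n y \<le> j"
proof -
  from assms obtain j where j: "fst n \<le> j \<and> P n (j, idx j y)" by blast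
  show "fst n \<le> sig n y" "P n (sig n y, idx (sig n y) y)"
    using LeastI[of "\<lambda>j. fst n \<le> j \<and> P n (j, idx j y)", OF j] unfolding sig_def by auto
  show "\<And>j. fst n \<le> j \<Longrightarrow> j < sig n y \<Longrightarrow> \<not> P n (j, idx j y)"
    using not_less_Least[of _ "\<lambda>j. fst n \<le> j \<and> P n (j, idx j y)"] unfolding sig_def by blast
  show "\<And>j. fst n \<le> j \<Longrightarrow> P n (j, idx j y) \<Longrightarrow> sig n y \<le> j"
    using Least_le[of "\<lambda>j. fst n \<le> j \<and> P n (j, idx j y)"] unfolding sig_def by blast
qed

lemma Cc_node: "y \<in> Cc n \<Longrightarrow> y \<in> Qho \<and> n = (fst n, idx (fst n) y)"
  unfolding Cc_def by (cases n) auto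

lemma St_sub: "d \<in> St n \<Longrightarrow> Cc d \<subseteq> Cc n"
proof -
  assume "d \<in> St n"
  then obtain y where y: "y \<in> Cc n" "\<exists>j \<ge> fst n. P n (j, idx j y)" and d: "d = (sig n y, idx (sig n y) y)"
    unfolding St_def by blast
  have yQ: "y \<in> Qho" and n: "n = (fst n, idx (fst n) y)" using Cc_node[OF y(1)] by auto
  show ?thesis unfolding d using nest(1)[OF yQ sig_props(1)[OF y(2)]] n by simp
qed

lemma sig_eq:
  assumes y: "y \<in> Qho" "\<exists>j \<ge> fst n. P n (j, idx j y)" and z: "z \<in> Qho"
    and e: "idx (sig n y) z = idx (sig n y) y"
  shows "(\<exists>j \<ge> fst n. P n (j, idx j z)) \<and> sig n z = sig n y"
proof -
  have agree: "idx j z = idx j y" if "j \<le> sig n y" for j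
    by (rule idx_cons[OF y(1) z that e])
  have P1: "P n (sig n y, idx (sig n y) z)" using sig_props(2)[OF y(2)] e by simp
  have ex: "\<exists>j \<ge> fst n. P n (j, idx j z)" using P1 sig_props(1)[OF y(2)] by blast
  have "sig n z \<le> sig n y" by (rule sig_props(4)[OF ex sig_props(1)[OF y(2)] P1])
  moreover have "\<not> sig n z < sig n y"
  proof
    assume lt: "sig n z < sig n y"
    have "P n (sig n z, idx (sig n z) z)" by (rule sig_props(2)[OF ex])
    then have "P n (sig n z, idx (sig n z) y)" using agree[of "sig n z"] lt by simp
    moreover have "\<not> P n (sig n z, idx (sig n z) y)"
      by (rule sig_props(3)[OF y(2) sig_props(1)[OF ex] lt])
    ultimately show False by contradiction
  qed
  ultimately show ?thesis using ex by simp
qed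

lemma St_disj: "disjoint_family_on Cc (St n)"
  unfolding disjoint_family_on_def
proof (intro ballI impI)
  fix d1 d2 assume d1: "d1 \<in> St n" and d2: "d2 \<in> St n" and ne: "d1 \<noteq> d2"
  show "Cc d1 \<inter> Cc d2 = {}"
  proof (rule ccontr)
    assume "Cc d1 \<inter> Cc d2 \<noteq> {}"
    then obtain z where z1: "z \<in> Cc d1" and z2: "z \<in> Cc d2" by blast
    have key: "d = (sig n z, idx (sig n z) z)" if "d \<in> St n" "z \<in> Cc d" for d
    proof -
      from that obtain y where y: "y \<in> Cc n" "\<exists>j \<ge> fst n. P n (j, idx j y)" and d: "d = (sig n y, idx (sig n y) y)"
        unfolding St_def by blast
      have zQ: "z \<in> Qho" and e: "idx (sig n y) z = idx (sig n y) y" using that(2) unfolding d Cc_def by auto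
      have "sig n z = sig n y" using sig_eq[OF Cc_node[OF y(1), THEN conjunct1] y(2) zQ e] by simp
      then show ?thesis using d e by simp
    qed
    show False using key[OF d1 z1] key[OF d2 z2] ne by simp
  qed
qed

lemma St_countable: "countable (St n)"
proof -
  have "St n \<subseteq> (SIGMA j:UNIV. PiE Basis (\<lambda>_. {..<(2::nat)^j}))"
  proof
    fix d assume "d \<in> St n"
    then obtain y where y: "y \<in> Cc n" and d: "d = (sig n y, idx (sig n y) y)"
      unfolding St_def by blast
    have yQ: "y \<in> Qho" using Cc_node[OF y] by simp
    show "d \<in> (SIGMA j:UNIV. PiE Basis (\<lambda>_. {..<(2::nat)^j}))"
      unfolding d using idx_props(3)[OF yQ] by (auto simp: idx_def)
  qed
  moreover have "countable (SIGMA j:UNIV. PiE Basis (\<lambda>_. {..<(2::nat)^j}))"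
    by (rule countable_SIGMA) (auto intro!: countable_finite finite_PiE)
  ultimately show ?thesis by (rule countable_subset)
qed

end

context Cells begin

lemma Cc_in_Kc_cbox: "Cc n \<subseteq> cbox (corner n) (corner n + sj (fst n) *\<^sub>R One)"
  using Cc_sub_Kc[of n] unfolding Kc_def .

lemma half: "2 * emeasure lebesgue (\<Union>(Cc ` St n)) \<le> emeasure lebesgue (Cc n)"
proof (cases "Cc n = {}")
  case True
  then have "St n = {}" unfolding St_def by auto
  then show ?thesis by simp
next
  case False
  then obtain x0 where x0: "x0 \<in> Cc n" by blast
  have x0Q: "x0 \<in> Qho" and n: "n = (fst n, idx (fst n) x0)" using Cc_node[OF x0] by auto
  define c where "c = mu n"
  define om where "om = osc n"
  define mK where "mK = measure lebesgue (Kc n)"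
  have o0: "om \<ge> 0" unfolding om_def by (rule osc_nonneg)
  have mKpos: "mK > 0" unfolding mK_def using Kc_meas(2)[of n] sj_pos[of "fst n"] by simp
  have emCn: "emeasure lebesgue (Cc n) = ennreal mK"
    unfolding mK_def using Cc_meas(1)[OF x0Q, of "fst n"] Kc_meas(2)[of n] n by (metis fst_conv)
  have RICn: "RI (Cc n) c = om * mK"
    unfolding c_def om_def mK_def using RI_CK[OF x0Q, of "fst n" "mu n"] RI_osc[of n] n by (metis fst_conv)
  have KQ: "Kc n \<subseteq> cbox a (a + h *\<^sub>R One)" using Kc_sub_Q[OF x0Q, of "fst n"] n by (metis fst_conv)
  have dfacts: "Cc d \<subseteq> Cc n \<and> RI (Cc d) c > 2 * om * measure lebesgue (Cc d) \<and> emeasure lebesgue (Cc d) = ennreal (measure lebesgue (Cc d))"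
    if d: "d \<in> St n" for d
  proof -
    from d obtain y where y: "y \<in> Cc n" "\<exists>j \<ge> fst n. P n (j, idx j y)" and dd: "d = (sig n y, idx (sig n y) y)"
      unfolding St_def by blast
    have yQ: "y \<in> Qho" using Cc_node[OF y(1)] by simp
    have Pd: "P n d" using sig_props(2)[OF y(2)] dd by simp
    have "RI (Cc d) c = RI (Kc d) c" unfolding dd by (rule RI_CK[OF yQ])
    moreover have "measure lebesgue (Cc d) = measure lebesgue (Kc d)"
      unfolding dd using Cc_meas(2)[OF yQ] Kc_meas(2) by simp
    moreover have "emeasure lebesgue (Cc d) = ennreal (measure lebesgue (Cc d))"
      unfolding dd using Cc_meas[OF yQ] by simp
    ultimately show ?thesis using Pd St_sub[OF d] unfolding P_def c_def om_def by simp
  qed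
  have Cc_sub_Q: "Cc d \<subseteq> cbox a (a + h *\<^sub>R One)" if "d \<in> St n" for d
    using dfacts[OF that] Cc_sub_Kc[of n] KQ by blast
  show ?thesis
  proof (cases "om = 0")
    case True
    have "St n = {}"
    proof (rule ccontr)
      assume "St n \<noteq> {}"
      then obtain d where d: "d \<in> St n" by blast
      have "RI (Cc d) c \<le> RI (Cc n) c"
        by (rule RI_mono[OF Cc_sets Cc_sets _ order_trans[OF Cc_sub_Kc KQ]]) (use dfacts[OF d] in blast)
      then show False using dfacts[OF d] RICn True by simp
    qed
    then show ?thesis by simp
  next
    case False
    then have opos: "om > 0" using o0 by simp
    define g where "g y = ennreal (indicator (Kc n) y * \<bar>f y - c\<bar>)" for y
    have gm: "g \<in> borel_measurable lebesgue"
    proof -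
      have "set_integrable lebesgue (Kc n) (\<lambda>y. \<bar>f y - c\<bar>)"
        using si_abs[OF Kc_sets, of n "corner n" "corner n + sj (fst n) *\<^sub>R One" c] by (simp add: Kc_def)
      then have "(\<lambda>y. indicator (Kc n) y *\<^sub>R \<bar>f y - c\<bar>) \<in> borel_measurable lebesgue"
        unfolding set_integrable_def by blast
      then show ?thesis unfolding g_def by simp
    qed
    let ?nu = "density lebesgue g"
    have nuS: "emeasure ?nu S = ennreal (RI S c)" if S: "S \<in> sets lebesgue" "S \<subseteq> Kc n" for S
    proof -
      have "emeasure ?nu S = (\<integral>\<^sup>+y. g y * indicator S y \<partial>lebesgue)"
        by (rule emeasure_density[OF gm S(1)])
      also have "\<dots> = set_nn_integral lebesgue S (\<lambda>y. ennreal \<bar>f y - c\<bar>)"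
        using S(2) by (intro nn_integral_cong) (auto simp: g_def split: split_indicator)
      also have "\<dots> = ennreal (RI S c)"
        by (rule J_eq[OF S(1) order_trans[OF S(2)], of "corner n" "corner n + sj (fst n) *\<^sub>R One"]) (simp add: Kc_def)
      finally show ?thesis .
    qed
    have sn: "sets ?nu = sets lebesgue" by simp
    let ?U = "\<Union>(Cc ` St n)"
    have Usub: "?U \<subseteq> Cc n" using dfacts by blast
    have Usets: "?U \<in> sets lebesgue"
      using St_countable[of n] by (auto intro!: sets.countable_UN' Cc_sets)
    have "ennreal (2 * om) * emeasure lebesgue ?U = ennreal (2 * om) * (\<integral>\<^sup>+d. emeasure lebesgue (Cc d) \<partial>count_space (St n))"
      by (simp add: emeasure_UN_countable[OF Cc_sets St_countable St_disj])
    also have "\<dots> = (\<integral>\<^sup>+d. ennreal (2 * om) * emeasure lebesgue (Cc d) \<partial>count_space (St n))"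
      by (simp add: nn_integral_cmult)
    also have "\<dots> \<le> (\<integral>\<^sup>+d. emeasure ?nu (Cc d) \<partial>count_space (St n))"
    proof (intro nn_integral_mono)
      fix d assume "d \<in> space (count_space (St n))"
      then have d: "d \<in> St n" by simp
      have "ennreal (2 * om) * emeasure lebesgue (Cc d) = ennreal (2 * om * measure lebesgue (Cc d))"
        using dfacts[OF d] opos by (simp add: ennreal_mult)
      also have "\<dots> \<le> ennreal (RI (Cc d) c)" using dfacts[OF d] by (intro ennreal_leI) simp
      also have "\<dots> = emeasure ?nu (Cc d)"
        using nuS[OF Cc_sets, of d] dfacts[OF d] Cc_sub_Kc[of n] by auto
      finally show "ennreal (2 * om) * emeasure lebesgue (Cc d) \<le> emeasure ?nu (Cc d)" .
    qed
    also have "\<dots> = emeasure ?nu ?U"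
      by (rule emeasure_UN_countable[symmetric]) (use Cc_sets St_countable St_disj in auto)
    also have "\<dots> \<le> emeasure ?nu (Cc n)"
      by (rule emeasure_mono[OF Usub]) (simp add: Cc_sets)
    also have "\<dots> = ennreal (om * mK)" using nuS[OF Cc_sets Cc_sub_Kc] RICn by simp
    finally have ineq: "ennreal (2 * om) * emeasure lebesgue ?U \<le> ennreal (om * mK)" .
    have "ennreal om * (2 * emeasure lebesgue ?U) \<le> ennreal om * ennreal mK"
      using ineq opos mKpos by (simp add: ennreal_mult mult.assoc mult.left_commute)
    then have "2 * emeasure lebesgue ?U \<le> ennreal mK"
      using opos by (subst (asm) ennreal_mult_le_mult_iff) auto
    then show ?thesis using emCn by simp
  qed
qed

end

context Cells begin

definition KK :: real where "KK = 2 ^ (DIM('a) + 1)"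
definition Bad :: "nat \<Rightarrow> nat \<times> ('a \<Rightarrow> nat) \<Rightarrow> 'a set" where
  "Bad m n = {x \<in> Cc n. \<exists>j \<ge> fst n. ennreal \<bar>mu (j, idx j x) - mu n\<bar> > ennreal (real m * KK) * sharp f x}"

lemma KK_ge2: "KK \<ge> 2"
proof -
  have "(2::real) ^ 1 \<le> 2 ^ (DIM('a) + 1)" by (rule power_increasing) auto
  then show ?thesis unfolding KK_def by simp
qed

lemma notP_bound:
  assumes x: "x \<in> Qho" and j: "fst n \<le> j" and n: "n = (fst n, idx (fst n) x)" and nP: "\<not> P n (j, idx j x)"
  shows "\<bar>mu (j, idx j x) - mu n\<bar> \<le> 2 * osc n"
proof -
  let ?d = "(j, idx j x)"
  have m: "measure lebesgue (Kc ?d) > 0" using Kc_meas(2)[of ?d] sj_pos[of j] by simp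
  have "\<bar>mu ?d - mu n\<bar> * measure lebesgue (Kc ?d) \<le> RI (Kc ?d) (mu n)" by (rule jensen_K)
  also have "\<dots> \<le> 2 * osc n * measure lebesgue (Kc ?d)" using nP unfolding P_def by simp
  finally show ?thesis using m by simp
qed

lemma Bad_step: "Bad (Suc m) n \<subseteq> \<Union>((Bad m) ` St n)"
proof
  fix x assume "x \<in> Bad (Suc m) n"
  then obtain j where xC: "x \<in> Cc n" and j: "fst n \<le> j"
    and H: "ennreal \<bar>mu (j, idx j x) - mu n\<bar> > ennreal (real (Suc m) * KK) * sharp f x"
    unfolding Bad_def by blast
  have xQ: "x \<in> Qho" and n: "n = (fst n, idx (fst n) x)" using Cc_node[OF xC] by auto
  have KKp: "KK > 0" using KK_ge2 by simp
  have "sharp f x \<noteq> \<infinity>"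
  proof
    assume "sharp f x = \<infinity>"
    then have "ennreal (real (Suc m) * KK) * sharp f x = \<infinity>" using KKp by (simp add: ennreal_mult_top)
    then show False using H by simp
  qed
  then obtain s where s: "sharp f x = ennreal s" "s \<ge> 0" by (cases "sharp f x") auto
  have Hr: "\<bar>mu (j, idx j x) - mu n\<bar> > real (Suc m) * KK * s"
    using H s KKp by (simp add: ennreal_mult[symmetric] ennreal_less_iff)
  have oscs: "osc n \<le> s"
    using osc_sharp[of x n] Cc_sub_Kc[of n] xC s osc_nonneg[of n] by auto
  have Pj: "P n (j, idx j x)"
  proof (rule ccontr)
    assume "\<not> P n (j, idx j x)"
    then have "\<bar>mu (j, idx j x) - mu n\<bar> \<le> 2 * osc n" by (rule notP_bound[OF xQ j n])
    also have "\<dots> \<le> KK * s" using oscs KK_ge2 s(2) by (metis mult_mono' osc_nonneg order_trans zero_le_numeral)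
    also have "\<dots> \<le> real (Suc m) * KK * s" using KKp s(2) by (simp add: mult_right_mono)
    finally show False using Hr by simp
  qed
  have ex: "\<exists>j \<ge> fst n. P n (j, idx j x)" using Pj j by blast
  define sg where "sg = sig n x"
  define d where "d = (sg, idx sg x)"
  have dSt: "d \<in> St n" unfolding d_def sg_def St_def using xC ex by blast
  have xd: "x \<in> Cc d" unfolding d_def Cc_def using xQ by simp
  have sgj: "sg \<le> j" unfolding sg_def by (rule sig_props(4)[OF ex j Pj])
  have sg0: "fst n \<le> sg" unfolding sg_def by (rule sig_props(1)[OF ex])
  have notPn: "\<not> P n (fst n, idx (fst n) x)"
  proof
    assume "P n (fst n, idx (fst n) x)"
    then have "RI (Kc n) (mu n) > 2 * osc n * measure lebesgue (Kc n)" unfolding P_def using n by simp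
    then show False using RI_osc[of n] osc_nonneg[of n] Kc_meas(2)[of n] sj_pos[of "fst n"]
      by (smt (verit) mult_right_mono zero_le_power)
  qed
  have sgne: "sg \<noteq> fst n" using sig_props(2)[OF ex] notPn unfolding sg_def by auto
  define p where "p = sg - 1"
  have pn: "fst n \<le> p" "p < sg" "p \<le> sg" using sg0 sgne unfolding p_def by auto
  have nPp: "\<not> P n (p, idx p x)" unfolding sg_def by (rule sig_props(3)[OF ex pn(1) pn(2)[unfolded sg_def]])
  have sjp: "sj p = 2 * sj sg"
  proof -
    have "sg = Suc p" using pn unfolding p_def by simp
    then show ?thesis unfolding sj_def by simp
  qed
  have mKp: "measure lebesgue (Kc (p, idx p x)) = 2 ^ DIM('a) * measure lebesgue (Kc d)"
    unfolding d_def Kc_meas(2) by (simp add: sjp power_mult_distrib)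
  have md: "measure lebesgue (Kc d) > 0" using Kc_meas(2)[of d] sj_pos[of "fst d"] by simp
  have dn: "\<bar>mu d - mu n\<bar> \<le> KK * s"
  proof -
    have "\<bar>mu d - mu n\<bar> * measure lebesgue (Kc d) \<le> RI (Kc d) (mu n)" by (rule jensen_K)
    also have "\<dots> \<le> RI (Kc (p, idx p x)) (mu n)"
      unfolding d_def by (rule RI_mono[OF Kc_sets Kc_sets nest(2)[OF xQ pn(3)] Kc_sub_Q[OF xQ]])
    also have "\<dots> \<le> 2 * osc n * measure lebesgue (Kc (p, idx p x))" using nPp unfolding P_def by simp
    also have "\<dots> = (KK * osc n) * measure lebesgue (Kc d)" unfolding mKp KK_def by simp
    finally have "\<bar>mu d - mu n\<bar> \<le> KK * osc n" using md by simp
    also have "\<dots> \<le> KK * s" using oscs KKp by simp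
    finally show ?thesis .
  qed
  have "\<bar>mu (j, idx j x) - mu d\<bar> > real m * KK * s"
    using Hr dn by (simp add: algebra_simps)
  then have "ennreal \<bar>mu (j, idx j x) - mu d\<bar> > ennreal (real m * KK) * sharp f x"
    using s KKp by (simp add: ennreal_mult[symmetric] ennreal_less_iff)
  then have "x \<in> Bad m d" unfolding Bad_def using xd sgj d_def by auto
  then show "x \<in> \<Union>((Bad m) ` St n)" using dSt by blast
qed

lemma Bad_tree: "Bad m n \<subseteq> treeT Cc St m n"
proof (induction m arbitrary: n)
  case 0
  then show ?case unfolding Bad_def by auto
next
  case (Suc m)
  show ?case using Bad_step[of m n] Suc by fastforce
qed

lemma tree_bound: "treeT Cc St m n \<in> sets lebesgue \<and> 2^m * emeasure lebesgue (treeT Cc St m n) \<le> emeasure lebesgue (Cc n)"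
  using treeT_props[OF Cc_sets St_countable St_sub St_disj half] by blast

end


lemma coord1:
  fixes a x r \<rho> dd s h l c :: real
  assumes "a \<le> x" "x \<le> a + h" "r \<le> x" "x \<le> r + \<rho>" "dd \<le> x" "x \<le> dd + s" "a \<le> dd" "dd + s \<le> a + h"
    "s > 0" "l = min (2 * s) h" "\<rho> \<le> s \<or> l = h" "c = min (max a (min r dd)) (a + h - l)"
  shows "a \<le> c" "c + l \<le> a + h"
    "\<And>y. r \<le> y \<Longrightarrow> y \<le> r + \<rho> \<Longrightarrow> a \<le> y \<Longrightarrow> y \<le> a + h \<Longrightarrow> c \<le> y \<and> y \<le> c + l"
    "\<And>y. dd \<le> y \<Longrightarrow> y \<le> dd + s \<Longrightarrow> c \<le> y \<and> y \<le> c + l"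
  using assms by (auto simp: min_def max_def split: if_splits)

context Cells begin

lemma corner_bounds:
  assumes x: "x \<in> Qho" and i: "i \<in> Basis"
  shows "a \<bullet> i \<le> corner (j, idx j x) \<bullet> i" "corner (j, idx j x) \<bullet> i + sj j \<le> a \<bullet> i + h"
proof -
  show "a \<bullet> i \<le> corner (j, idx j x) \<bullet> i" using corner_inner[OF i] sj_pos[of j] by simp
  have k: "idx j x i < 2^j" using idx_props[OF x i] by simp
  then have "real (idx j x i) + 1 \<le> 2^j"
    by (metis Suc_leI of_nat_Suc of_nat_le_iff of_nat_numeral of_nat_power add.commute)
  then have "(real (idx j x i) + 1) * sj j \<le> 2^j * sj j" using sj_pos[of j] by (intro mult_right_mono) auto
  also have "2^j * sj j = h" unfolding sj_def by simp
  finally show "corner (j, idx j x) \<bullet> i + sj j \<le> a \<bullet> i + h" using corner_inner[OF i] by (simp add: algebra_simps)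
qed

lemma choose_scale:
  assumes \<rho>: "\<rho> > 0"
  obtains j where "(h \<le> \<rho> \<and> j = 0) \<or> (\<rho> \<le> sj j \<and> sj (Suc j) < \<rho>)"
proof (cases "h \<le> \<rho>")
  case True then show ?thesis using that by blast
next
  case False
  obtain N where N: "h / \<rho> < 2^N" using real_arch_pow[of 2 "h/\<rho>"] by auto
  have "sj (Suc N) < \<rho>"
  proof -
    have "h < 2^N * \<rho>" using N \<rho> by (simp add: field_simps)
    then have "h / 2^N < \<rho>" by (simp add: field_simps)
    moreover have "sj (Suc N) \<le> h / 2^N" unfolding sj_def using hpos by (simp add: field_simps)
    ultimately show ?thesis by simp
  qed
  define j where "j = (LEAST j. sj (Suc j) < \<rho>)"
  have j1: "sj (Suc j) < \<rho>" unfolding j_def by (rule LeastI[of _ N]) fact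
  have j2: "\<rho> \<le> sj j"
  proof (cases j)
    case 0 then show ?thesis using False unfolding sj_def by simp
  next
    case (Suc j')
    have "\<not> sj (Suc j') < \<rho>" using not_less_Least[of j' "\<lambda>j. sj (Suc j) < \<rho>"] Suc unfolding j_def by simp
    then show ?thesis using Suc by simp
  qed
  show ?thesis using that j1 j2 by blast
qed

lemma geo_T:
  assumes x: "x \<in> Qho" and \<rho>: "\<rho> > 0" and xR: "x \<in> cbox r (r + \<rho> *\<^sub>R One)"
  obtains j l c where "0 < l" "l \<le> 4 * \<rho>" "l \<le> 2 * sj j" "cbox c (c + l *\<^sub>R One) \<subseteq> cbox a (a + h *\<^sub>R One)"
    "cbox r (r + \<rho> *\<^sub>R One) \<inter> cbox a (a + h *\<^sub>R One) \<subseteq> cbox c (c + l *\<^sub>R One)"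
    "Kc (j, idx j x) \<subseteq> cbox c (c + l *\<^sub>R One)"
proof -
  obtain j where jc: "(h \<le> \<rho> \<and> j = 0) \<or> (\<rho> \<le> sj j \<and> sj (Suc j) < \<rho>)" using choose_scale[OF \<rho>] by blast
  define s where "s = sj j"
  define l where "l = min (2 * s) h"
  define dd where "dd = corner (j, idx j x)"
  have spos: "s > 0" unfolding s_def by (rule sj_pos)
  have sS: "sj (Suc j) = s / 2" unfolding s_def sj_def by simp
  have alt: "\<rho> \<le> s \<or> l = h" using jc hpos unfolding l_def s_def sj_def by (auto simp: min_def)
  have l4: "l \<le> 4 * \<rho>" using jc sS hpos \<rho> unfolding l_def s_def sj_def by (auto simp: min_def)
  have lpos: "0 < l" unfolding l_def using spos hpos by simp
  define cc where "cc i = min (max (a \<bullet> i) (min (r \<bullet> i) (dd \<bullet> i))) (a \<bullet> i + h - l)" for i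
  define c where "c = (\<Sum>i\<in>Basis. cc i *\<^sub>R i)"
  have ci: "c \<bullet> i = cc i" if "i \<in> Basis" for i
    unfolding c_def using that by (simp add: inner_sum_left inner_Basis if_distrib cong: if_cong)
  have C: "a \<bullet> i \<le> c \<bullet> i \<and> c \<bullet> i + l \<le> a \<bullet> i + h
      \<and> (\<forall>y. r \<bullet> i \<le> y \<and> y \<le> r \<bullet> i + \<rho> \<and> a \<bullet> i \<le> y \<and> y \<le> a \<bullet> i + h \<longrightarrow> c \<bullet> i \<le> y \<and> y \<le> c \<bullet> i + l)
      \<and> (\<forall>y. dd \<bullet> i \<le> y \<and> y \<le> dd \<bullet> i + s \<longrightarrow> c \<bullet> i \<le> y \<and> y \<le> c \<bullet> i + l)" if i: "i \<in> Basis" for i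
  proof -
    have xi: "a \<bullet> i \<le> x \<bullet> i" "x \<bullet> i \<le> a \<bullet> i + h" using x i unfolding Qho_def by auto
    have ri: "r \<bullet> i \<le> x \<bullet> i" "x \<bullet> i \<le> r \<bullet> i + \<rho>" using xR i by (auto simp: mem_box inner_add_left)
    have di: "dd \<bullet> i \<le> x \<bullet> i" "x \<bullet> i \<le> dd \<bullet> i + s"
      using idx_props(1,2)[OF x i, of j] corner_inner[OF i, of j "idx j x"] unfolding dd_def s_def by auto
    have db: "a \<bullet> i \<le> dd \<bullet> i" "dd \<bullet> i + s \<le> a \<bullet> i + h" using corner_bounds[OF x i, of j] unfolding dd_def s_def by auto
    note co = coord1[OF xi(1,2) ri di db spos l_def alt cc_def[of i]]
    show ?thesis unfolding ci[OF i] using co by blast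
  qed
  have T1: "cbox c (c + l *\<^sub>R One) \<subseteq> cbox a (a + h *\<^sub>R One)"
  proof
    fix y assume "y \<in> cbox c (c + l *\<^sub>R One)"
    then have y: "\<forall>i\<in>Basis. c \<bullet> i \<le> y \<bullet> i \<and> y \<bullet> i \<le> c \<bullet> i + l" by (simp add: mem_box inner_add_left)
    show "y \<in> cbox a (a + h *\<^sub>R One)" unfolding mem_box
    proof (intro ballI conjI)
      fix i :: 'a assume i: "i \<in> Basis"
      show "a \<bullet> i \<le> y \<bullet> i" "y \<bullet> i \<le> (a + h *\<^sub>R One) \<bullet> i"
        using y[rule_format, OF i] C[OF i] i by (auto simp: inner_add_left)
    qed
  qed
  have T2: "cbox r (r + \<rho> *\<^sub>R One) \<inter> cbox a (a + h *\<^sub>R One) \<subseteq> cbox c (c + l *\<^sub>R One)"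
  proof
    fix y assume "y \<in> cbox r (r + \<rho> *\<^sub>R One) \<inter> cbox a (a + h *\<^sub>R One)"
    then have y: "\<forall>i\<in>Basis. r \<bullet> i \<le> y \<bullet> i \<and> y \<bullet> i \<le> r \<bullet> i + \<rho> \<and> a \<bullet> i \<le> y \<bullet> i \<and> y \<bullet> i \<le> a \<bullet> i + h"
      by (simp add: mem_box inner_add_left)
    show "y \<in> cbox c (c + l *\<^sub>R One)" unfolding mem_box
    proof (intro ballI conjI)
      fix i :: 'a assume i: "i \<in> Basis"
      show "c \<bullet> i \<le> y \<bullet> i" "y \<bullet> i \<le> (c + l *\<^sub>R One) \<bullet> i"
        using y[rule_format, OF i] C[OF i] i by (auto simp: inner_add_left)
    qed
  qed
  have T3: "Kc (j, idx j x) \<subseteq> cbox c (c + l *\<^sub>R One)"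
  proof
    fix y assume "y \<in> Kc (j, idx j x)"
    then have y: "\<forall>i\<in>Basis. dd \<bullet> i \<le> y \<bullet> i \<and> y \<bullet> i \<le> dd \<bullet> i + s"
      unfolding Kc_def dd_def s_def by (simp add: mem_box inner_add_left)
    show "y \<in> cbox c (c + l *\<^sub>R One)" unfolding mem_box
    proof (intro ballI conjI)
      fix i :: 'a assume i: "i \<in> Basis"
      show "c \<bullet> i \<le> y \<bullet> i" "y \<bullet> i \<le> (c + l *\<^sub>R One) \<bullet> i"
        using y[rule_format, OF i] C[OF i] i by (auto simp: inner_add_left)
    qed
  qed
  have l2: "l \<le> 2 * sj j" unfolding l_def s_def by simp
  show ?thesis using that[OF lpos l4 l2 T1 T2 T3] .
qed

end

context Cells begin

lemma x_in_D: "x \<in> Qho \<Longrightarrow> x \<in> Kc (j, idx j x)"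
  using Cc_sub_Kc[of "(j, idx j x)"] unfolding Cc_def by auto

lemma cube_bound:
  assumes x: "x \<in> Qho" and \<rho>: "\<rho> > 0" and xR: "x \<in> cbox r (r + \<rho> *\<^sub>R One)" and s: "sharp f x = ennreal s" "s \<ge> 0"
  shows "\<exists>j. set_nn_integral lebesgue (cbox r (r + \<rho> *\<^sub>R One))
              (\<lambda>y. ennreal \<bar>indicator (cbox a (a + h *\<^sub>R One)) y * (f y - avg f (cbox a (a + h *\<^sub>R One)))\<bar>)
            / emeasure lebesgue (cbox r (r + \<rho> *\<^sub>R One))
         \<le> ennreal (4 ^ DIM('a) * ((1 + 2 ^ DIM('a)) * s + \<bar>mu (j, idx j x) - avg f (cbox a (a + h *\<^sub>R One))\<bar>))"
proof -
  let ?Q = "cbox a (a + h *\<^sub>R One)" and ?R = "cbox r (r + \<rho> *\<^sub>R One)"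
  let ?n = "DIM('a)"
  obtain j l c where lpos: "0 < l" and l4: "l \<le> 4 * \<rho>" and l2: "l \<le> 2 * sj j"
    and TQ: "cbox c (c + l *\<^sub>R One) \<subseteq> ?Q" and RQT: "?R \<inter> ?Q \<subseteq> cbox c (c + l *\<^sub>R One)"
    and DT: "Kc (j, idx j x) \<subseteq> cbox c (c + l *\<^sub>R One)"
    by (rule geo_T[OF x \<rho> xR])
  let ?T = "cbox c (c + l *\<^sub>R One)" and ?D = "(j, idx j x)"
  define fQ where "fQ = avg f ?Q"
  define fT where "fT = avg f ?T"
  have xT: "x \<in> ?T" using DT x_in_D[OF x] by blast
  have mT: "measure lebesgue ?T = l ^ ?n" using cube_measure[of l c] lpos by simp
  have oscT: "RI ?T fT \<le> s * l ^ ?n"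
  proof -
    have "ennreal (RI ?T fT / l ^ ?n) \<le> ennreal s" using sharp_osc[OF lpos xT] s unfolding fT_def by simp
    then have "RI ?T fT / l ^ ?n \<le> s" using s(2) by simp
    then show ?thesis using lpos by (simp add: field_simps)
  qed
  have mD: "measure lebesgue (Kc ?D) = sj j ^ ?n" using Kc_meas(2)[of ?D] by simp
  have ln: "l ^ ?n \<le> 2 ^ ?n * sj j ^ ?n"
    using power_mono[OF l2, of ?n] lpos by (simp add: power_mult_distrib)
  have DfT: "\<bar>mu ?D - fT\<bar> \<le> 2 ^ ?n * s"
  proof -
    have "\<bar>mu ?D - fT\<bar> * sj j ^ ?n \<le> RI (Kc ?D) fT" using jensen_K[of ?D fT] mD by simp
    also have "\<dots> \<le> RI ?T fT" by (rule RI_mono[OF Kc_sets _ DT subset_refl]) simp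
    also have "\<dots> \<le> s * l ^ ?n" by (rule oscT)
    also have "\<dots> \<le> s * (2 ^ ?n * sj j ^ ?n)" using ln s(2) by (rule mult_left_mono)
    finally have "\<bar>mu ?D - fT\<bar> * sj j ^ ?n \<le> (2 ^ ?n * s) * sj j ^ ?n" by (simp add: algebra_simps)
    then show ?thesis using sj_pos[of j] by simp
  qed
  have RIT: "RI ?T fQ \<le> l ^ ?n * ((1 + 2 ^ ?n) * s + \<bar>mu ?D - fQ\<bar>)"
  proof -
    have "RI ?T fQ \<le> RI ?T fT + \<bar>fT - fQ\<bar> * l ^ ?n" using RI_tri[of ?T c "c + l *\<^sub>R One" fQ fT] mT by (simp add: abs_minus_commute)
    also have "\<dots> \<le> s * l ^ ?n + (2 ^ ?n * s + \<bar>mu ?D - fQ\<bar>) * l ^ ?n"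
      using oscT DfT lpos by (intro add_mono mult_right_mono) auto
    also have "\<dots> = l ^ ?n * ((1 + 2 ^ ?n) * s + \<bar>mu ?D - fQ\<bar>)" by (simp add: algebra_simps)
    finally show ?thesis .
  qed
  have int_le: "set_nn_integral lebesgue ?R (\<lambda>y. ennreal \<bar>indicator ?Q y * (f y - fQ)\<bar>)
      \<le> set_nn_integral lebesgue ?T (\<lambda>y. ennreal \<bar>f y - fQ\<bar>)"
    by (rule nn_integral_mono) (use RQT in \<open>auto split: split_indicator\<close>)
  also have "\<dots> = ennreal (RI ?T fQ)" by (rule J_eq[OF _ subset_refl]) simp
  finally have int_le2: "set_nn_integral lebesgue ?R (\<lambda>y. ennreal \<bar>indicator ?Q y * (f y - fQ)\<bar>) \<le> ennreal (RI ?T fQ)" .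
  have eR: "emeasure lebesgue ?R = ennreal (\<rho> ^ ?n)" using cube_emeasure[of \<rho> r] \<rho> by simp
  have B0: "0 \<le> (1 + 2 ^ ?n) * s + \<bar>mu ?D - fQ\<bar>" using s(2) by simp
  have "set_nn_integral lebesgue ?R (\<lambda>y. ennreal \<bar>indicator ?Q y * (f y - fQ)\<bar>) / emeasure lebesgue ?R
      \<le> ennreal (RI ?T fQ) / ennreal (\<rho> ^ ?n)"
    unfolding eR by (rule divide_right_mono_ennreal[OF int_le2])
  also have "\<dots> = ennreal (RI ?T fQ / \<rho> ^ ?n)" using \<rho> RI_nonneg by (simp add: divide_ennreal)
  also have "\<dots> \<le> ennreal (4 ^ ?n * ((1 + 2 ^ ?n) * s + \<bar>mu ?D - fQ\<bar>))"
  proof (rule ennreal_leI)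
    have "RI ?T fQ / \<rho> ^ ?n \<le> l ^ ?n * ((1 + 2 ^ ?n) * s + \<bar>mu ?D - fQ\<bar>) / \<rho> ^ ?n"
      using RIT \<rho> by (simp add: divide_right_mono)
    also have "\<dots> = (l / \<rho>) ^ ?n * ((1 + 2 ^ ?n) * s + \<bar>mu ?D - fQ\<bar>)" by (simp add: power_divide)
    also have "\<dots> \<le> 4 ^ ?n * ((1 + 2 ^ ?n) * s + \<bar>mu ?D - fQ\<bar>)"
    proof (rule mult_right_mono[OF _ B0])
      have "l / \<rho> \<le> 4" using l4 \<rho> by (simp add: field_simps)
      then show "(l / \<rho>) ^ ?n \<le> 4 ^ ?n" using lpos \<rho> by (intro power_mono) auto
    qed
    finally show "RI ?T fQ / \<rho> ^ ?n \<le> 4 ^ ?n * ((1 + 2 ^ ?n) * s + \<bar>mu ?D - fQ\<bar>)" .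
  qed
  finally show ?thesis unfolding fQ_def by blast
qed

end


lemma arith_bound:
  fixes t KK K4 B :: real and m :: nat
  assumes KK: "KK > 0" and K4: "K4 > 0" and m: "m = nat \<lfloor>(t / K4 - B) / KK\<rfloor>"
  shows "1 / 2 ^ m \<le> 2 * exp (ln 2 * B / KK) * exp (- (ln 2 / (K4 * KK)) * t)"
proof -
  define v where "v = (t / K4 - B) / KK"
  have mv: "real m \<ge> v - 1" unfolding m v_def by linarith
  have "(2::real) ^ m = exp (real m * ln 2)"
    by (simp add: exp_of_nat_mult)
  then have "1 / (2::real) ^ m = exp (- (real m * ln 2))" by (simp add: exp_minus field_simps)
  also have "\<dots> \<le> exp (- ((v - 1) * ln 2))" using mv by (intro exp_le_cancel_iff[THEN iffD2]) (simp add: mult_right_mono)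
  also have "- ((v - 1) * ln 2) = ln 2 + ln 2 * B / KK + (- (ln 2 / (K4 * KK)) * t)"
    unfolding v_def using KK K4 by (simp add: field_simps)
  also have "exp (ln 2 + ln 2 * B / KK + (- (ln 2 / (K4 * KK)) * t)) = 2 * exp (ln 2 * B / KK) * exp (- (ln 2 / (K4 * KK)) * t)"
    by (simp only: exp_add) simp
  finally show ?thesis .
qed

context Cells begin

lemma RIQ_pos:
  assumes nc: "\<not> (\<exists>k. AE x in lebesgue. x \<in> cbox a (a + h *\<^sub>R One) \<longrightarrow> f x = k)"
  shows "RI (cbox a (a + h *\<^sub>R One)) (avg f (cbox a (a + h *\<^sub>R One))) > 0"
proof (rule ccontr)
  let ?Q = "cbox a (a + h *\<^sub>R One)"
  let ?c = "avg f ?Q"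
  assume "\<not> ?thesis"
  then have z: "RI ?Q ?c = 0" using RI_nonneg[of ?Q ?c] by simp
  have J0: "set_nn_integral lebesgue ?Q (\<lambda>y. ennreal \<bar>f y - ?c\<bar>) = 0"
    using J_eq[OF _ subset_refl, of a "a + h *\<^sub>R One" ?c] z by simp
  have "set_integrable lebesgue ?Q (\<lambda>y. \<bar>f y - ?c\<bar>)" by (rule si_abs[OF _ subset_refl]) simp
  then have "(\<lambda>y. indicator ?Q y *\<^sub>R \<bar>f y - ?c\<bar>) \<in> borel_measurable lebesgue"
    unfolding set_integrable_def by blast
  then have meas: "(\<lambda>y. ennreal \<bar>f y - ?c\<bar> * indicator ?Q y) \<in> borel_measurable lebesgue"
  proof -
    assume mm: "(\<lambda>y. indicator ?Q y *\<^sub>R \<bar>f y - ?c\<bar>) \<in> borel_measurable lebesgue"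
    have "(\<lambda>y. ennreal (indicator ?Q y *\<^sub>R \<bar>f y - ?c\<bar>)) \<in> borel_measurable lebesgue" using mm by simp
    moreover have "(\<lambda>y. ennreal (indicator ?Q y *\<^sub>R \<bar>f y - ?c\<bar>)) = (\<lambda>y. ennreal \<bar>f y - ?c\<bar> * indicator ?Q y)"
      by (auto split: split_indicator)
    ultimately show ?thesis by metis
  qed
  have "AE x in lebesgue. ennreal \<bar>f x - ?c\<bar> * indicator ?Q x = 0"
    using J0 nn_integral_0_iff_AE[OF meas] by simp
  then have "AE x in lebesgue. x \<in> ?Q \<longrightarrow> f x = ?c"
    by (rule AE_mp) (auto split: split_indicator)
  then show False using nc by blast
qed

lemma main_bound:
  assumes nc: "\<not> (\<exists>k. AE x in lebesgue. x \<in> cbox a (a + h *\<^sub>R One) \<longrightarrow> f x = k)" and t: "t > 0"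
  shows "outer_lmeasure {x \<in> cbox a (a + h *\<^sub>R One).
      maxop (\<lambda>y. indicator (cbox a (a + h *\<^sub>R One)) y * (f y - avg f (cbox a (a + h *\<^sub>R One)))) x / sharp f x > ennreal t}
    \<le> ennreal (h ^ DIM('a) / 2 ^ (nat \<lfloor>(t / 4 ^ DIM('a) - (1 + 2 ^ DIM('a))) / KK\<rfloor>))"
proof -
  let ?Q = "cbox a (a + h *\<^sub>R One)"
  let ?N = "DIM('a)"
  define fQ where "fQ = avg f ?Q"
  define G where "G y = indicator ?Q y * (f y - fQ)" for y
  define m where "m = nat \<lfloor>(t / 4 ^ ?N - (1 + 2 ^ ?N)) / KK\<rfloor>"
  define E where "E = {x \<in> ?Q. maxop G x / sharp f x > ennreal t}"
  have aQ: "a \<in> Qho" unfolding Qho_def using hpos by simp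
  define r0 where "r0 = (0::nat, idx 0 a)"
  have Kr0: "Kc r0 = ?Q" and Cr0: "Cc r0 = Qho" unfolding r0_def using root[OF aQ] by auto
  have mur0: "mu r0 = fQ" unfolding mu_def fQ_def Kr0 ..
  have emQ: "emeasure lebesgue ?Q = ennreal (h ^ ?N)" using cube_emeasure[of h a] hpos by simp
  have emQho: "emeasure lebesgue Qho = ennreal (h ^ ?N)" using Cc_meas(1)[OF aQ, of 0] root(2)[OF aQ] by (simp add: sj_def)
  have outer_le: "outer_lmeasure E \<le> emeasure lebesgue U" if "U \<in> sets lebesgue" "E \<subseteq> U" for U
    unfolding outer_lmeasure_def by (rule INF_lower) (use that in blast)
  have RIQ: "RI ?Q fQ > 0" unfolding fQ_def by (rule RIQ_pos[OF nc])
  have sharp_pos: "sharp f x > 0" if "x \<in> ?Q" for x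
  proof -
    have "ennreal (RI ?Q fQ / h ^ ?N) \<le> sharp f x" using sharp_osc[OF hpos that] unfolding fQ_def .
    moreover have "RI ?Q fQ / h ^ ?N > 0" using RIQ hpos by simp
    ultimately show ?thesis by (metis ennreal_less_zero_iff order_less_le_trans)
  qed
  show ?thesis
  proof (cases "m = 0")
    case True
    have "outer_lmeasure E \<le> emeasure lebesgue ?Q" by (rule outer_le) (auto simp: E_def)
    then show ?thesis using True emQ unfolding E_def G_def fQ_def m_def by simp
  next
    case False
    then have m1: "m \<ge> 1" by simp
    define U where "U = (?Q - Qho) \<union> treeT Cc St m r0"
    have tb: "treeT Cc St m r0 \<in> sets lebesgue" "2^m * emeasure lebesgue (treeT Cc St m r0) \<le> emeasure lebesgue (Cc r0)"
      using tree_bound[of m r0] by auto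
    have Us: "U \<in> sets lebesgue" unfolding U_def using Q_minus_Qho_null tb(1) by auto
    have EU: "E \<subseteq> U"
    proof
      fix x assume xE: "x \<in> E"
      then have xQ: "x \<in> ?Q" and rat: "maxop G x / sharp f x > ennreal t" unfolding E_def by auto
      show "x \<in> U"
      proof (cases "x \<in> Qho")
        case False then show ?thesis using xQ unfolding U_def by blast
      next
        case True
        note xh = True
        have "sharp f x \<noteq> \<infinity>"
        proof
          assume inf: "sharp f x = \<infinity>"
          show False using rat unfolding inf by simp
        qed
        then obtain s where s: "sharp f x = ennreal s" "s \<ge> 0" by (cases "sharp f x") auto
        have spos: "s > 0" using sharp_pos[OF xQ] s by (metis ennreal_eq_0_iff linorder_not_le not_less_iff_gr_or_eq ennreal_less_zero_iff)
        have big: "maxop G x > ennreal (t * s)"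
        proof (rule ccontr)
          assume "\<not> ?thesis"
          then have "maxop G x \<le> ennreal (t * s)" by simp
          then have "maxop G x / sharp f x \<le> ennreal (t * s) / ennreal s" unfolding s by (rule divide_right_mono_ennreal)
          also have "\<dots> = ennreal t" using spos t by (simp add: divide_ennreal)
          finally show False using rat by simp
        qed
        then obtain R where R: "is_cube R" "x \<in> R"
          and Rt: "ennreal (t * s) < set_nn_integral lebesgue R (\<lambda>y. ennreal \<bar>G y\<bar>) / emeasure lebesgue R"
          unfolding maxop_def less_SUP_iff by blast
        obtain r \<rho> where \<rho>: "\<rho> > 0" and Rr: "R = cbox r (r + \<rho> *\<^sub>R One)" using R(1) unfolding is_cube_def by blast
        obtain j where cb: "set_nn_integral lebesgue R (\<lambda>y. ennreal \<bar>G y\<bar>) / emeasure lebesgue R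
            \<le> ennreal (4 ^ ?N * ((1 + 2 ^ ?N) * s + \<bar>mu (j, idx j x) - fQ\<bar>))"
          using cube_bound[OF xh \<rho> R(2)[unfolded Rr] s] unfolding Rr G_def fQ_def by blast
        have "ennreal (t * s) < ennreal (4 ^ ?N * ((1 + 2 ^ ?N) * s + \<bar>mu (j, idx j x) - fQ\<bar>))"
          using Rt cb by simp
        then have ts: "t * s < 4 ^ ?N * ((1 + 2 ^ ?N) * s + \<bar>mu (j, idx j x) - fQ\<bar>)"
          using t spos by (subst (asm) ennreal_less_iff) auto
        have KKp: "KK > 0" using KK_ge2 by simp
        define v where "v = (t / 4 ^ ?N - (1 + 2 ^ ?N)) / KK"
        have "\<lfloor>v\<rfloor> \<ge> 1" using m1 unfolding m_def v_def by linarith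
        then have mv: "real m \<le> v" unfolding m_def v_def[symmetric] by linarith
        have "real m * KK * s \<le> v * KK * s" using mv KKp spos by (simp add: mult_right_mono)
        also have "\<dots> = (t / 4 ^ ?N - (1 + 2 ^ ?N)) * s" unfolding v_def using KKp by simp
        also have "\<dots> < \<bar>mu (j, idx j x) - fQ\<bar>"
        proof -
          have "t * s / 4 ^ ?N < (1 + 2 ^ ?N) * s + \<bar>mu (j, idx j x) - fQ\<bar>"
            using ts by (simp add: field_simps)
          then show ?thesis by (simp add: field_simps)
        qed
        finally have "real m * KK * s < \<bar>mu (j, idx j x) - mu r0\<bar>" unfolding mur0 .
        then have "ennreal \<bar>mu (j, idx j x) - mu r0\<bar> > ennreal (real m * KK) * sharp f x"
          using s KKp by (simp add: ennreal_mult[symmetric] ennreal_less_iff)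
        then have "x \<in> Bad m r0" unfolding Bad_def using xh Cr0 r0_def by auto
        then show ?thesis using Bad_tree unfolding U_def by blast
      qed
    qed
    have "emeasure lebesgue U \<le> emeasure lebesgue (?Q - Qho) + emeasure lebesgue (treeT Cc St m r0)"
      unfolding U_def by (rule emeasure_subadditive) (use Q_minus_Qho_null tb(1) in auto)
    also have "emeasure lebesgue (?Q - Qho) = 0" using Q_minus_Qho_null by auto
    also have "emeasure lebesgue (treeT Cc St m r0) \<le> ennreal (h ^ ?N / 2 ^ m)"
    proof -
      have "ennreal (2 ^ m) * emeasure lebesgue (treeT Cc St m r0) \<le> ennreal (2 ^ m) * ennreal (h ^ ?N / 2 ^ m)"
      proof -
        have e1: "ennreal (2 ^ m) * ennreal (h ^ ?N / 2 ^ m) = ennreal (h ^ ?N)"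
          using hpos by (simp add: ennreal_mult[symmetric])
        have e2: "ennreal (2 ^ m) = (2::ennreal) ^ m" using ennreal_power[of 2 m] by simp
        have "ennreal (2 ^ m) * emeasure lebesgue (treeT Cc St m r0) \<le> ennreal (h ^ ?N)"
          unfolding e2 using tb(2) emQho Cr0 by simp
        then show ?thesis by (simp only: e1)
      qed
      then show ?thesis by (subst (asm) ennreal_mult_le_mult_iff) auto
    qed
    finally have "outer_lmeasure E \<le> ennreal (h ^ ?N / 2 ^ m)" using outer_le[OF Us EU] by simp
    then show ?thesis unfolding E_def G_def fQ_def m_def .
  qed
qed

end


theorem theorem5p1:
  shows "\<exists>C c::real. C > 0 \<and> c > 0 \<and>
    (\<forall>(Q::'a::euclidean_space set) (f::'a \<Rightarrow> real) (t::real).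
      is_cube Q \<and> locally_integrable f \<and>
      \<not> (\<exists>k. AE x in lebesgue. x \<in> Q \<longrightarrow> f x = k) \<and> t > 0 \<longrightarrow>
      outer_lmeasure {x \<in> Q. maxop (\<lambda>y. indicator Q y * (f y - avg f Q)) x / sharp f x > ennreal t}
        \<le> ennreal (C * exp (- c * t) * measure lebesgue Q))"
proof -
  define KK0 :: real where "KK0 = 2 ^ (DIM('a) + 1)"
  define K4 :: real where "K4 = 4 ^ DIM('a)"
  define B :: real where "B = 1 + 2 ^ DIM('a)"
  define C0 where "C0 = 2 * exp (ln 2 * B / KK0)"
  define c0 where "c0 = ln 2 / (K4 * KK0)"
  have KK0p: "KK0 > 0" and K4p: "K4 > 0" unfolding KK0_def K4_def by auto
  have C0p: "C0 > 0" unfolding C0_def by simp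
  have c0p: "c0 > 0" unfolding c0_def using KK0p K4p by simp
  have main: "outer_lmeasure {x \<in> Q. maxop (\<lambda>y. indicator Q y * (f y - avg f Q)) x / sharp f x > ennreal t}
        \<le> ennreal (C0 * exp (- c0 * t) * measure lebesgue Q)"
    if Q: "is_cube (Q::'a set)" and li: "locally_integrable f" and nc: "\<not> (\<exists>k. AE x in lebesgue. x \<in> Q \<longrightarrow> f x = k)"
      and t: "t > 0" for Q f t
  proof -
    obtain a h where h: "h > 0" and Qe: "Q = cbox a (a + h *\<^sub>R One)" using Q unfolding is_cube_def by blast
    interpret Cells f a h by unfold_locales (use li h in auto)
    have KKe: "KK = KK0" unfolding KK_def KK0_def ..
    define m where "m = nat \<lfloor>(t / K4 - B) / KK0\<rfloor>"
    have mb: "outer_lmeasure {x \<in> Q. maxop (\<lambda>y. indicator Q y * (f y - avg f Q)) x / sharp f x > ennreal t}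
        \<le> ennreal (h ^ DIM('a) / 2 ^ m)"
      using main_bound[OF nc[unfolded Qe] t] unfolding Qe m_def KKe K4_def B_def .
    have ab: "1 / 2 ^ m \<le> C0 * exp (- c0 * t)"
      using arith_bound[OF KK0p K4p m_def] unfolding C0_def c0_def by simp
    have "h ^ DIM('a) / 2 ^ m = h ^ DIM('a) * (1 / 2 ^ m)" by simp
    also have "\<dots> \<le> h ^ DIM('a) * (C0 * exp (- c0 * t))" using ab h by (intro mult_left_mono) auto
    also have "\<dots> = C0 * exp (- c0 * t) * measure lebesgue Q" unfolding Qe using cube_measure[of h a] h by simp
    finally show ?thesis using mb by (meson ennreal_leI order_trans)
  qed
  show ?thesis using C0p c0p main by blast
qed


end
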